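(* Let $\mathcal{U}$ be a uniformity on a set $X$ and let $\widehat{\mathcal{U}}$ be its completion (a uniformity on the completion $\widehat{X}\supseteq X$). Then $\mathcal{U} =_T \widehat{\mathcal{U}}$, where both are ordered by reverse inclusion.
   Context: A directed set is a partially ordered set in which any two elements have a common upper bound. For directed sets $P,Q$, $P \ge_T Q$ means there is a map $\phi:P\to Q$ such that $\phi(C)$ is cofinal in $Q$ for every cofinal $C\subseteq P$; $P =_T Q$ means $P\ge_T Q$ and $Q \ge_T P$. *)

theory Defs
  imports Main
begin

definition uniformity_on :: "'a set \<Rightarrow> ('a \<times> 'a) set set \<Rightarrow> bool" where
  "uniformity_on X \<U> \<longleftrightarrow>
     \<U> \<noteq> {} \<and>
     (\<forall>U\<in>\<U>. Id_on X \<subseteq> U \<and> U \<subseteq> X \<times> X) \<and>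
     (\<forall>U\<in>\<U>. \<forall>V. U \<subseteq> V \<and> V \<subseteq> X \<times> X \<longrightarrow> V \<in> \<U>) \<and>
     (\<forall>U\<in>\<U>. \<forall>V\<in>\<U>. U \<inter> V \<in> \<U>) \<and>
     (\<forall>U\<in>\<U>. U\<inverse> \<in> \<U>) \<and>
     (\<forall>U\<in>\<U>. \<exists>V\<in>\<U>. V O V \<subseteq> U)"

definition cauchy_filter_on :: "'a set \<Rightarrow> ('a \<times> 'a) set set \<Rightarrow> 'a filter \<Rightarrow> bool" where
  "cauchy_filter_on Y \<U> F \<longleftrightarrow>
     F \<noteq> bot \<and> eventually (\<lambda>y. y \<in> Y) F \<and>
     (\<forall>U\<in>\<U>. \<exists>A. eventually (\<lambda>y. y \<in> A) F \<and> A \<times> A \<subseteq> U)"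

definition converges_to_unif :: "('a \<times> 'a) set set \<Rightarrow> 'a filter \<Rightarrow> 'a \<Rightarrow> bool" where
  "converges_to_unif \<U> F x \<longleftrightarrow> (\<forall>U\<in>\<U>. eventually (\<lambda>y. (x, y) \<in> U) F)"

definition complete_unif :: "'a set \<Rightarrow> ('a \<times> 'a) set set \<Rightarrow> bool" where
  "complete_unif Y \<U> \<longleftrightarrow>
     (\<forall>F. cauchy_filter_on Y \<U> F \<longrightarrow> (\<exists>x\<in>Y. converges_to_unif \<U> F x))"

definition uniform_completion ::
  "'a set \<Rightarrow> ('a \<times> 'a) set set \<Rightarrow> 'a set \<Rightarrow> ('a \<times> 'a) set set \<Rightarrow> bool" where
  "uniform_completion X \<U> Xh \<U>h \<longleftrightarrow>
     X \<subseteq> Xh \<and> uniformity_on Xh \<U>h \<and>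
     {V \<inter> (X \<times> X) | V. V \<in> \<U>h} = \<U> \<and>
     (\<forall>x\<in>Xh. \<forall>V\<in>\<U>h. \<exists>a\<in>X. (x, a) \<in> V) \<and>
     complete_unif Xh \<U>h"

definition cofinal_in :: "'p set \<Rightarrow> ('p \<Rightarrow> 'p \<Rightarrow> bool) \<Rightarrow> 'p set \<Rightarrow> bool" where
  "cofinal_in P le C \<longleftrightarrow> C \<subseteq> P \<and> (\<forall>p\<in>P. \<exists>c\<in>C. le p c)"

definition tukey_ge :: "'p set \<Rightarrow> ('p \<Rightarrow> 'p \<Rightarrow> bool) \<Rightarrow> 'q set \<Rightarrow> ('q \<Rightarrow> 'q \<Rightarrow> bool) \<Rightarrow> bool" where
  "tukey_ge P leP Q leQ \<longleftrightarrow>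
     (\<exists>\<phi>. \<phi> ` P \<subseteq> Q \<and> (\<forall>C. cofinal_in P leP C \<longrightarrow> cofinal_in Q leQ (\<phi> ` C)))"

definition tukey_equiv :: "'p set \<Rightarrow> ('p \<Rightarrow> 'p \<Rightarrow> bool) \<Rightarrow> 'q set \<Rightarrow> ('q \<Rightarrow> 'q \<Rightarrow> bool) \<Rightarrow> bool" where
  "tukey_equiv P leP Q leQ \<longleftrightarrow> tukey_ge P leP Q leQ \<and> tukey_ge Q leQ P leP"

end

theory Submission
  imports Defs
begin

lemma unif_parts:
  assumes "uniformity_on Y \<V>"
  shows "\<And>U. U \<in> \<V> \<Longrightarrow> U \<subseteq> Y \<times> Y"
    and "\<And>U V. U \<in> \<V> \<Longrightarrow> U \<subseteq> V \<Longrightarrow> V \<subseteq> Y \<times> Y \<Longrightarrow> V \<in> \<V>"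
    and "\<And>U V. U \<in> \<V> \<Longrightarrow> V \<in> \<V> \<Longrightarrow> U \<inter> V \<in> \<V>"
    and "\<And>U. U \<in> \<V> \<Longrightarrow> U\<inverse> \<in> \<V>"
    and "\<And>U. U \<in> \<V> \<Longrightarrow> \<exists>V\<in>\<V>. V O V \<subseteq> U"
proof -
  note h = assms[unfolded uniformity_on_def]
  have c2: "\<forall>U\<in>\<V>. Id_on Y \<subseteq> U \<and> U \<subseteq> Y \<times> Y" using h by (rule conjunct1[OF conjunct2])
  have c3: "\<forall>U\<in>\<V>. \<forall>V. U \<subseteq> V \<and> V \<subseteq> Y \<times> Y \<longrightarrow> V \<in> \<V>" using h by (rule conjunct1[OF conjunct2[OF conjunct2]])
  have c4: "\<forall>U\<in>\<V>. \<forall>V\<in>\<V>. U \<inter> V \<in> \<V>" using h by (rule conjunct1[OF conjunct2[OF conjunct2[OF conjunct2]]])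
  have c5: "\<forall>U\<in>\<V>. U\<inverse> \<in> \<V>" using h by (rule conjunct1[OF conjunct2[OF conjunct2[OF conjunct2[OF conjunct2]]]])
  have c6: "\<forall>U\<in>\<V>. \<exists>V\<in>\<V>. V O V \<subseteq> U" using h by (rule conjunct2[OF conjunct2[OF conjunct2[OF conjunct2[OF conjunct2]]]])
  show "\<And>U. U \<in> \<V> \<Longrightarrow> U \<subseteq> Y \<times> Y" using c2 by simp
  show "\<And>U V. U \<in> \<V> \<Longrightarrow> U \<subseteq> V \<Longrightarrow> V \<subseteq> Y \<times> Y \<Longrightarrow> V \<in> \<V>" using c3 by simp
  show "\<And>U V. U \<in> \<V> \<Longrightarrow> V \<in> \<V> \<Longrightarrow> U \<inter> V \<in> \<V>" using c4 by simp
  show "\<And>U. U \<in> \<V> \<Longrightarrow> U\<inverse> \<in> \<V>" using c5 by simp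
  show "\<And>U. U \<in> \<V> \<Longrightarrow> \<exists>V\<in>\<V>. V O V \<subseteq> U" using c6 by simp
qed

lemma triple_comp:
  assumes "uniformity_on Y \<V>" "W \<in> \<V>"
  shows "\<exists>V\<in>\<V>. V O V O V \<subseteq> W"
proof -
  from unif_parts(5)[OF assms] obtain V1 where V1: "V1 \<in> \<V>" "V1 O V1 \<subseteq> W" by blast
  from unif_parts(5)[OF assms(1) V1(1)] obtain V2 where V2: "V2 \<in> \<V>" "V2 O V2 \<subseteq> V1" by blast
  have "V1 \<inter> V2 \<in> \<V>" using unif_parts(3)[OF assms(1) V1(1) V2(1)] .
  moreover have "(V1 \<inter> V2) O (V1 \<inter> V2) O (V1 \<inter> V2) \<subseteq> W"
    using V1 V2 by blast
  ultimately show ?thesis by blast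
qed

theorem mainTheorem2:
  fixes X Xh :: "'a set" and \<U> \<U>h :: "('a \<times> 'a) set set"
  assumes "uniformity_on X \<U>"
    and "uniform_completion X \<U> Xh \<U>h"
  shows "tukey_equiv \<U> (\<lambda>A B. B \<subseteq> A) \<U>h (\<lambda>A B. B \<subseteq> A)"
proof -
  have XXh: "X \<subseteq> Xh" and uh: "uniformity_on Xh \<U>h"
    and eq: "{V \<inter> (X \<times> X) | V. V \<in> \<U>h} = \<U>"
    and dense: "\<forall>x\<in>Xh. \<forall>V\<in>\<U>h. \<exists>a\<in>X. (x, a) \<in> V"
    using assms(2) unfolding uniform_completion_def by auto
  have sub: "\<And>V. V \<in> \<U>h \<Longrightarrow> V \<subseteq> Xh \<times> Xh" using unif_parts(1)[OF uh] by blast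
  have up: "\<And>V W. V \<in> \<U>h \<Longrightarrow> V \<subseteq> W \<Longrightarrow> W \<subseteq> Xh \<times> Xh \<Longrightarrow> W \<in> \<U>h"
    using unif_parts(2)[OF uh] by blast
  have int: "\<And>V W. V \<in> \<U>h \<Longrightarrow> W \<in> \<U>h \<Longrightarrow> V \<inter> W \<in> \<U>h"
    using unif_parts(3)[OF uh] by blast
  have inv: "\<And>V. V \<in> \<U>h \<Longrightarrow> V\<inverse> \<in> \<U>h"
    using unif_parts(4)[OF uh] by blast
  have ge1: "tukey_ge \<U>h (\<lambda>A B. B \<subseteq> A) \<U> (\<lambda>A B. B \<subseteq> A)"
    unfolding tukey_ge_def
  proof (intro exI[of _ "\<lambda>V. V \<inter> (X \<times> X)"] conjI allI impI)
    show "(\<lambda>V. V \<inter> (X \<times> X)) ` \<U>h \<subseteq> \<U>" using eq by blast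
  next
    fix C assume C: "cofinal_in \<U>h (\<lambda>A B. B \<subseteq> A) C"
    show "cofinal_in \<U> (\<lambda>A B. B \<subseteq> A) ((\<lambda>V. V \<inter> (X \<times> X)) ` C)"
      unfolding cofinal_in_def
    proof (intro conjI ballI)
      show "(\<lambda>V. V \<inter> (X \<times> X)) ` C \<subseteq> \<U>" using C eq unfolding cofinal_in_def by blast
    next
      fix U assume "U \<in> \<U>"
      then obtain V where V: "V \<in> \<U>h" "U = V \<inter> (X \<times> X)" using eq by blast
      then obtain c where "c \<in> C" "c \<subseteq> V" using C unfolding cofinal_in_def by blast
      then have "c \<inter> (X \<times> X) \<subseteq> U" "c \<inter> (X \<times> X) \<in> (\<lambda>V. V \<inter> (X \<times> X)) ` C"
        using V by auto
      then show "\<exists>c\<in>(\<lambda>V. V \<inter> (X \<times> X)) ` C. c \<subseteq> U" by blast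
    qed
  qed
  define \<phi> where "\<phi> U = {(x,y) \<in> Xh \<times> Xh. \<forall>V\<in>\<U>h. \<exists>a\<in>X. \<exists>b\<in>X. (x,a)\<in>V \<and> (a,b)\<in>U \<and> (b,y)\<in>V}" for U
  have phi_in: "\<phi> U \<in> \<U>h" if UU: "U \<in> \<U>" for U
  proof -
    obtain V0 where V0: "V0 \<in> \<U>h" "U = V0 \<inter> (X \<times> X)" using eq UU by blast
    obtain V1 where V1: "V1 \<in> \<U>h" "V1 O V1 O V1 \<subseteq> V0" using triple_comp[OF uh V0(1)] by blast
    have "V1 \<subseteq> \<phi> U"
    proof
      fix p assume p: "p \<in> V1"
      obtain x y where xy: "p = (x,y)" by (cases p)
      have xyh: "x \<in> Xh" "y \<in> Xh" using sub[OF V1(1)] p xy by auto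
      have "\<exists>a\<in>X. \<exists>b\<in>X. (x,a)\<in>V \<and> (a,b)\<in>U \<and> (b,y)\<in>V" if V: "V \<in> \<U>h" for V
      proof -
        obtain a where a: "a \<in> X" "(x,a) \<in> V \<inter> V1\<inverse>"
          using dense xyh int[OF V inv[OF V1(1)]] by blast
        obtain b where b: "b \<in> X" "(y,b) \<in> V\<inverse> \<inter> V1"
          using dense xyh int[OF inv[OF V] V1(1)] by blast
        have "(a,b) \<in> V1 O V1 O V1" using a b p xy by blast
        then have "(a,b) \<in> U" using V1 V0 a b by blast
        then show ?thesis using a b by blast
      qed
      then show "p \<in> \<phi> U" unfolding \<phi>_def using xy xyh by blast
    qed
    moreover have "\<phi> U \<subseteq> Xh \<times> Xh" unfolding \<phi>_def by blast
    ultimately show ?thesis using up V1(1) by blast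
  qed
  have small: "\<exists>U'\<in>\<U>. \<forall>U. U \<subseteq> U' \<longrightarrow> \<phi> U \<subseteq> W" if W: "W \<in> \<U>h" for W
  proof -
    obtain V where V: "V \<in> \<U>h" "V O V O V \<subseteq> W" using triple_comp[OF uh W] by blast
    have "V \<inter> (X \<times> X) \<in> \<U>" using eq V by blast
    moreover have "\<phi> U \<subseteq> W" if "U \<subseteq> V \<inter> (X \<times> X)" for U
    proof
      fix p assume "p \<in> \<phi> U"
      then obtain x y where xy: "p = (x,y)"
        and all: "\<forall>V\<in>\<U>h. \<exists>a\<in>X. \<exists>b\<in>X. (x,a)\<in>V \<and> (a,b)\<in>U \<and> (b,y)\<in>V"
        unfolding \<phi>_def by blast
      from bspec[OF all V(1)] obtain a b where "(x,a)\<in>V" "(a,b)\<in>U" "(b,y)\<in>V" by blast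
      then have "(x,y) \<in> V O V O V" using that by blast
      then show "p \<in> W" using V xy by blast
    qed
    ultimately show ?thesis by blast
  qed
  have ge2: "tukey_ge \<U> (\<lambda>A B. B \<subseteq> A) \<U>h (\<lambda>A B. B \<subseteq> A)"
    unfolding tukey_ge_def
  proof (intro exI[of _ \<phi>] conjI allI impI)
    show "\<phi> ` \<U> \<subseteq> \<U>h" using phi_in by blast
  next
    fix C assume C: "cofinal_in \<U> (\<lambda>A B. B \<subseteq> A) C"
    show "cofinal_in \<U>h (\<lambda>A B. B \<subseteq> A) (\<phi> ` C)"
      unfolding cofinal_in_def
    proof (intro conjI ballI)
      show "\<phi> ` C \<subseteq> \<U>h" using C phi_in unfolding cofinal_in_def by blast
    next
      fix W assume "W \<in> \<U>h"
      then obtain U' where U': "U' \<in> \<U>" "\<forall>U. U \<subseteq> U' \<longrightarrow> \<phi> U \<subseteq> W" using small by blast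
      then obtain c where "c \<in> C" "c \<subseteq> U'" using C unfolding cofinal_in_def by blast
      then show "\<exists>c\<in>\<phi> ` C. c \<subseteq> W" using U' by blast
    qed
  qed
  show ?thesis unfolding tukey_equiv_def using ge1 ge2 by blast
qed

end
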